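(* Let $\tilde G$ be the infinite heavy-hexagonal graph and let $G$ be a finite subgraph of $\tilde G$. Let $L(G)$ be the interference graph of $G$. If $G$ contains two connected unit cells as a subgraph, then the chromatic number of $L(G)$ equals $6$, i.e. $\chi(L(G))=6$.
   Context: The infinite heavy-hexagonal graph $\tilde G$ is obtained from the infinite hexagonal (honeycomb) lattice by inserting one additional vertex into every edge (subdividing each edge once). A unit cell is the 12-vertex cycle of $\tilde G$ arising from a single hexagonal face of the honeycomb lattice; two unit cells are connected if their hexagons are adjacent (share a side). For a graph $G=(V,E)$ and an edge $e=\{i,j\}\in E$, let $N(e)=(N(i)\setminus\{j\})\cup(N(j)\setminus\{i\})$ be its neighborhood, where $N(v)$ is the set of neighbors of vertex $v$. The interference graph $L(G)$ has one vertex for each edge of $G$, and two distinct edges $e,f$ of $G$ are adjacent in $L(G)$ if they interfere, i.e. if $(e\cup N(e))\cap(f\cup N(f))\neq\emptyset$ (the qubits used by a parallel experiment on $e$, namely its endpoints and its neighboring qubits, overlap with those used for $f$). The chromatic number $\chi$ is the minimum number of colors in a proper vertex coloring. *)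

theory Defs
  imports Main
begin

text \<open>The honeycomb lattice is realised as the brick-wall lattice on \<open>\<int>\<^sup>2\<close>:
  vertex (x,y), horizontal edges (x,y)--(x+1,y), vertical edges (x,y)--(x,y+1) when x+y is even.
  Coordinates are doubled, so honeycomb vertex (x,y) is the point (2x,2y) and the subdivision
  vertex of an edge is its midpoint.\<close>

type_synonym hvert = "int \<times> int"

definition hh_vert :: "hvert \<Rightarrow> bool" where
  "hh_vert p \<longleftrightarrow> even (snd p) \<or>
     (even (fst p) \<and> odd (snd p) \<and> even (fst p div 2 + snd p div 2))"

definition unit_dist :: "hvert \<Rightarrow> hvert \<Rightarrow> bool" where
  "unit_dist u v \<longleftrightarrow> \<bar>fst u - fst v\<bar> + \<bar>snd u - snd v\<bar> = 1"

definition hh_edges :: "hvert set set" where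
  "hh_edges = {{u, v} | u v. hh_vert u \<and> hh_vert v \<and> unit_dist u v}"

text \<open>Unit cells: the hexagonal face of the brick wall with lower-left corner (x,y), x+y even,
  has honeycomb corners (x,y),(x+1,y),(x+2,y),(x+2,y+1),(x+1,y+1),(x,y+1).\<close>

definition valid_cell :: "int \<times> int \<Rightarrow> bool" where
  "valid_cell c \<longleftrightarrow> even (fst c + snd c)"

definition cell_cycle :: "int \<times> int \<Rightarrow> hvert list" where
  "cell_cycle c = (let a = 2 * fst c; b = 2 * snd c in
     [(a,b), (a+1,b), (a+2,b), (a+3,b), (a+4,b), (a+4,b+1),
      (a+4,b+2), (a+3,b+2), (a+2,b+2), (a+1,b+2), (a,b+2), (a,b+1)])"

definition cell_verts :: "int \<times> int \<Rightarrow> hvert set" where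
  "cell_verts c = set (cell_cycle c)"

definition cell_edges :: "int \<times> int \<Rightarrow> hvert set set" where
  "cell_edges c = {{cell_cycle c ! i, cell_cycle c ! ((i + 1) mod 12)} | i. i < 12}"

text \<open>Two unit cells are connected iff their hexagons share a side, i.e. the subdivided
  side gives common edges of the heavy-hex cycles.\<close>

definition cells_connected :: "int \<times> int \<Rightarrow> int \<times> int \<Rightarrow> bool" where
  "cells_connected c d \<longleftrightarrow> c \<noteq> d \<and> cell_edges c \<inter> cell_edges d \<noteq> {}"

definition finite_hh_subgraph :: "hvert set \<Rightarrow> hvert set set \<Rightarrow> bool" where
  "finite_hh_subgraph V E \<longleftrightarrow> finite V \<and> (\<forall>v\<in>V. hh_vert v) \<and> E \<subseteq> hh_edges \<and>
     (\<forall>e\<in>E. e \<subseteq> V)"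

definition contains_two_connected_cells :: "hvert set \<Rightarrow> hvert set set \<Rightarrow> bool" where
  "contains_two_connected_cells V E \<longleftrightarrow>
     (\<exists>c d. valid_cell c \<and> valid_cell d \<and> cells_connected c d \<and>
        cell_verts c \<union> cell_verts d \<subseteq> V \<and> cell_edges c \<union> cell_edges d \<subseteq> E)"

definition nbr :: "'a set set \<Rightarrow> 'a \<Rightarrow> 'a set" where
  "nbr E v = {u. {u, v} \<in> E}"

definition edge_nbhd :: "'a set set \<Rightarrow> 'a \<Rightarrow> 'a \<Rightarrow> 'a set" where
  "edge_nbhd E i j = (nbr E i - {j}) \<union> (nbr E j - {i})"

definition interfere :: "'a set set \<Rightarrow> 'a set \<Rightarrow> 'a set \<Rightarrow> bool" where
  "interfere E e f \<longleftrightarrow> e \<noteq> f \<and>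
     (\<exists>i j k l. e = {i, j} \<and> f = {k, l} \<and>
        ({i, j} \<union> edge_nbhd E i j) \<inter> ({k, l} \<union> edge_nbhd E k l) \<noteq> {})"

definition colorable :: "'b set \<Rightarrow> ('b \<Rightarrow> 'b \<Rightarrow> bool) \<Rightarrow> nat \<Rightarrow> bool" where
  "colorable W adj k \<longleftrightarrow> (\<exists>col :: 'b \<Rightarrow> nat. (\<forall>w\<in>W. col w < k) \<and>
     (\<forall>u\<in>W. \<forall>w\<in>W. adj u w \<longrightarrow> col u \<noteq> col w))"

definition chromatic_number :: "'b set \<Rightarrow> ('b \<Rightarrow> 'b \<Rightarrow> bool) \<Rightarrow> nat" where
  "chromatic_number W adj = (LEAST k. colorable W adj k)"

end

theory Submission
  imports Defs
begin

definition hvalid :: "int \<Rightarrow> int \<Rightarrow> int \<Rightarrow> int \<Rightarrow> bool" where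
  "hvalid X Y a b \<longleftrightarrow> (a = 1 \<and> b = 0) \<or> (a = -1 \<and> b = 0) \<or> (a = 0 \<and> b = 1 \<and> even (X+Y)) \<or> (a = 0 \<and> b = -1 \<and> odd (X+Y))"

lemma unit_cases:
  assumes "unit_dist (zx,zy) (mx,my)"
  shows "(zx = mx + 1 \<and> zy = my) \<or> (zx = mx - 1 \<and> zy = my) \<or> (zx = mx \<and> zy = my + 1) \<or> (zx = mx \<and> zy = my - 1)"
  using assms unfolding unit_dist_def by simp arith

lemma mid_nbr:
  assumes "hvalid X Y a b" "hh_vert (zx,zy)" "unit_dist (zx,zy) (2*X+a, 2*Y+b)"
  shows "\<bar>zx - 2*X\<bar> + \<bar>zy - 2*Y\<bar> \<le> 1 \<or> (zx = 2*X+2*a \<and> zy = 2*Y+2*b)"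
proof -
  have h: "even zy \<or> (even zx \<and> odd zy \<and> even (zx div 2 + zy div 2))" using assms(2) by (simp add: hh_vert_def)
  from assms(1) unit_cases[OF assms(3)] h show ?thesis unfolding hvalid_def
    by (elim disjE conjE; simp)
qed

lemma evenE2: "even (x::int) \<Longrightarrow> \<exists>k. x = 2*k" by auto
lemma oddE2: "odd (x::int) \<Longrightarrow> \<exists>k. x = 2*k+1" by presburger

lemma edge_form:
  assumes "hh_vert (x1,y1)" "hh_vert (x2,y2)" "unit_dist (x2,y2) (x1,y1)"
  shows "\<exists>X Y a b. hvalid X Y a b \<and> (((x1,y1) = (2*X,2*Y) \<and> (x2,y2) = (2*X+a,2*Y+b)) \<or> ((x2,y2) = (2*X,2*Y) \<and> (x1,y1) = (2*X+a,2*Y+b)))"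
proof -
  have H1: "even y1 \<or> (even x1 \<and> odd y1 \<and> even (x1 div 2 + y1 div 2))"
   and H2: "even y2 \<or> (even x2 \<and> odd y2 \<and> even (x2 div 2 + y2 div 2))"
    using assms by (auto simp: hh_vert_def)
  consider "x2 = x1 + 1 \<and> y2 = y1" | "x2 = x1 - 1 \<and> y2 = y1" | "x2 = x1 \<and> y2 = y1 + 1" | "x2 = x1 \<and> y2 = y1 - 1"
    using unit_cases[OF assms(3)] by blast
  then show ?thesis
  proof cases
    case 1
    then have "even y1" using H1 H2 by auto
    then obtain Y where Y: "y1 = 2*Y" by auto
    show ?thesis
    proof (cases "even x1")
      case True
      then obtain X where "x1 = 2*X" by auto
      then show ?thesis using 1 Y by (intro exI[of _ "X"] exI[of _ Y] exI[of _ "1"] exI[of _ 0]) (auto simp: hvalid_def)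
    next
      case False
      then obtain X where "x1 = 2*X + 1" using oddE2 by blast
      then show ?thesis using 1 Y by (intro exI[of _ "X+1"] exI[of _ Y] exI[of _ "-1"] exI[of _ 0]) (auto simp: hvalid_def)
    qed
  next
    case 2
    then have "even y1" using H1 H2 by auto
    then obtain Y where Y: "y1 = 2*Y" by auto
    show ?thesis
    proof (cases "even x1")
      case True
      then obtain X where "x1 = 2*X" by auto
      then show ?thesis using 2 Y by (intro exI[of _ "X"] exI[of _ Y] exI[of _ "-1"] exI[of _ 0]) (auto simp: hvalid_def)
    next
      case False
      then obtain X where "x1 = 2*X + 1" using oddE2 by blast
      then show ?thesis using 2 Y by (intro exI[of _ "X"] exI[of _ Y] exI[of _ "1"] exI[of _ 0]) (auto simp: hvalid_def)
    qed
  next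
    case 3
    show ?thesis
    proof (cases "even y1")
      case True
      then obtain Y where Y: "y1 = 2*Y" by auto
      have "even x1" "even (x1 div 2 + Y)" using H2 3 Y by auto
      then obtain X where X: "x1 = 2*X" by auto
      have "even (X+Y)" using `even (x1 div 2 + Y)` X by simp
      then show ?thesis using 3 X Y by (intro exI[of _ "X"] exI[of _ Y] exI[of _ "0"] exI[of _ 1]) (auto simp: hvalid_def)
    next
      case False
      then obtain Y where Y: "y1 = 2*Y+1" using oddE2 by blast
      have "even x1" "even (x1 div 2 + Y)" using H1 Y by auto
      then obtain X where X: "x1 = 2*X" by auto
      have "even (X+Y)" using `even (x1 div 2 + Y)` X by simp
      then show ?thesis using 3 X Y by (intro exI[of _ "X"] exI[of _ "Y+1"] exI[of _ "0"] exI[of _ "-1"]) (auto simp: hvalid_def)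
    qed
  next
    case 4
    show ?thesis
    proof (cases "even y1")
      case True
      have "y1 = 2*(y1 div 2 - 1) + 2" using True by simp
      then obtain Y where Y: "y1 = 2*Y + 2" by blast
      have "even x1" "even (x1 div 2 + Y)" using H2 4 Y by auto
      then obtain X where X: "x1 = 2*X" by auto
      have "odd (X+(Y+1))" using `even (x1 div 2 + Y)` X by simp
      then show ?thesis using 4 X Y by (intro exI[of _ "X"] exI[of _ "Y+1"] exI[of _ "0"] exI[of _ "-1"]) (auto simp: hvalid_def)
    next
      case False
      then obtain Y where Y: "y1 = 2*Y+1" using oddE2 by blast
      have "even x1" "even (x1 div 2 + Y)" using H1 Y by auto
      then obtain X where X: "x1 = 2*X" by auto
      have "even (X+Y)" using `even (x1 div 2 + Y)` X by simp
      then show ?thesis using 4 X Y by (intro exI[of _ "X"] exI[of _ "Y"] exI[of _ "0"] exI[of _ "1"]) (auto simp: hvalid_def)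
    qed
  qed
qed
definition dk :: "int \<Rightarrow> int" where
  "dk sx = (if sx mod 4 = 1 then 0 else if sx mod 4 = 3 then 1 else 2)"

definition cf :: "int \<Rightarrow> int \<Rightarrow> nat" where
  "cf sx sy = nat (2 * dk sx + ((sx+1) div 4 + (sy+1) div 4) mod 2)"

lemma cf_lt: "cf sx sy < 6"
proof -
  have "dk sx \<le> 2" unfolding dk_def by simp
  moreover have "((sx+1) div 4 + (sy+1) div 4) mod 2 < 2" by simp
  ultimately show ?thesis unfolding cf_def by linarith
qed

lemma d1: "(4*X + 1) mod 4 = (1::int)" "(4*X - 1) mod 4 = (3::int)" "(4*X) mod 4 = (0::int)"
  "(4*X + 2) div 4 = (X::int)" "(4*X) div 4 = (X::int)" "(4*X + 1) div 4 = (X::int)"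
  by presburger+


lemma cf_code:
  assumes "hvalid X Y a b"
  shows "cf (4*X+a) (4*Y+b) = nat (2*(if a = 1 then 0 else if a = -1 then 1 else 2) + (X+Y) mod 2)"
  using assms unfolding hvalid_def
  by (elim disjE conjE; simp add: cf_def dk_def d1)

lemma cf_inj:
  assumes "hvalid X Y a b" "hvalid X' Y' a' b'" "cf (4*X+a) (4*Y+b) = cf (4*X'+a') (4*Y'+b')"
  shows "a = a' \<and> b = b' \<and> (even (X+Y) \<longleftrightarrow> even (X'+Y'))"
proof -
  have e: "nat (2*(if a = 1 then 0 else if a = -1 then 1 else 2) + (X+Y) mod 2) = nat (2*(if a' = 1 then 0 else if a' = -1 then 1 else 2) + (X'+Y') mod 2)"
    using assms cf_code by metis
  have m1: "(X+Y) mod 2 = 0 \<or> (X+Y) mod 2 = 1" "(X'+Y') mod 2 = 0 \<or> (X'+Y') mod 2 = 1" by presburger+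
  have "a = a' \<and> (X+Y) mod 2 = (X'+Y') mod 2" using e m1 assms(1,2) unfolding hvalid_def
    by (elim disjE conjE; simp)
  then show ?thesis using assms(1,2) unfolding hvalid_def by presburger
qed

lemma geo:
  fixes X Y X' Y' a b zx zy :: int
  assumes par: "even (X + Y) = even (X' + Y')" and d: "(a = 1 \<and> b = 0) \<or> (a = -1 \<and> b = 0) \<or> (a = 0 \<and> (b = 1 \<or> b = -1))"
    and z1: "\<bar>zx - 2*X\<bar> + \<bar>zy - 2*Y\<bar> \<le> 1 \<or> (zx = 2*X+2*a \<and> zy = 2*Y+2*b)"
    and z2: "\<bar>zx - 2*X'\<bar> + \<bar>zy - 2*Y'\<bar> \<le> 1 \<or> (zx = 2*X'+2*a \<and> zy = 2*Y'+2*b)"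
  shows "X = X' \<and> Y = Y'"
  using z1
proof
  assume b1: "\<bar>zx - 2*X\<bar> + \<bar>zy - 2*Y\<bar> \<le> 1"
  show ?thesis using z2
  proof
    assume b2: "\<bar>zx - 2*X'\<bar> + \<bar>zy - 2*Y'\<bar> \<le> 1"
    have "\<bar>X - X'\<bar> + \<bar>Y - Y'\<bar> \<le> 1" using b1 b2 by arith
    then show ?thesis using par by presburger
  next
    assume "zx = 2*X'+2*a \<and> zy = 2*Y'+2*b"
    then have "X = X' + a \<and> Y = Y' + b" using b1 by presburger
    then show ?thesis using par d by presburger
  qed
next
  assume s1: "zx = 2*X+2*a \<and> zy = 2*Y+2*b"
  show ?thesis using z2
  proof
    assume b2: "\<bar>zx - 2*X'\<bar> + \<bar>zy - 2*Y'\<bar> \<le> 1"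
    then have "X' = X + a \<and> Y' = Y + b" using s1 by presburger
    then show ?thesis using par d by presburger
  next
    assume "zx = 2*X'+2*a \<and> zy = 2*Y'+2*b"
    then show ?thesis using s1 by simp
  qed
qed


definition CE :: "int \<Rightarrow> int \<Rightarrow> hvert set set" where
  "CE a b = {{(a,b),(a+1,b)}, {(a+1,b),(a+2,b)}, {(a+2,b),(a+3,b)}, {(a+3,b),(a+4,b)},
    {(a+4,b),(a+4,b+1)}, {(a+4,b+1),(a+4,b+2)}, {(a+4,b+2),(a+3,b+2)}, {(a+3,b+2),(a+2,b+2)},
    {(a+2,b+2),(a+1,b+2)}, {(a+1,b+2),(a,b+2)}, {(a,b+2),(a,b+1)}, {(a,b+1),(a,b)}}"

lemma lt12: "{i. i < (12::nat)} = {0,1,2,3,4,5,6,7,8,9,10,11}" by (auto simp: numeral_eq_Suc less_Suc_eq)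

lemma cell_edges_CE: "cell_edges c = CE (2*fst c) (2*snd c)"
proof -
  have "cell_edges c = (\<lambda>i. {cell_cycle c ! i, cell_cycle c ! ((i + 1) mod 12)}) ` {i. i < 12}"
    unfolding cell_edges_def by blast
  also have "\<dots> = CE (2*fst c) (2*snd c)"
    unfolding lt12 by (simp add: cell_cycle_def Let_def CE_def)
  finally show ?thesis .
qed



lemma phase1:
  fixes a b p q :: int
  assumes "e \<in> CE a b" "e \<in> CE (a+p) (b+q)"
  shows "(p,q) \<in> {(-4,-1), (-4,0), (-4,1), (-3,-2), (-3,0), (-3,2), (-2,-2), (-2,0), (-2,2), (-1,-2), (-1,0), (-1,2), (0,-2), (0,-1), (0,0), (0,1), (0,2), (1,-2), (1,0), (1,2), (2,-2), (2,0), (2,2), (3,-2), (3,0), (3,2), (4,-1), (4,0), (4,1)}"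
  using assms(1) unfolding CE_def
  apply (simp only: insert_iff empty_iff simp_thms)
  apply (elim disjE)
  using assms(2) apply (simp_all add: CE_def doubleton_eq_iff)
  apply (elim disjE conjE; simp)+
  done


lemma phase2:
  fixes x y x' y' :: int
  assumes "(2*(x'-x), 2*(y'-y)) \<in> {(-4,-1), (-4,0), (-4,1), (-3,-2), (-3,0), (-3,2), (-2,-2), (-2,0), (-2,2), (-1,-2), (-1,0), (-1,2), (0,-2), (0,-1), (0,0), (0,1), (0,2), (1,-2), (1,0), (1,2), (2,-2), (2,0), (2,2), (3,-2), (3,0), (3,2), (4,-1), (4,0), (4,1)}" "even (x+y)" "even (x'+y')" "(x,y) \<noteq> (x',y')"
  shows "(x',y') = (x + 2, y) \<or> (x',y') = (x - 2, y) \<or> (x',y') = (x + 1, y + 1) \<or>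
         (x',y') = (x - 1, y + 1) \<or> (x',y') = (x + 1, y - 1) \<or> (x',y') = (x - 1, y - 1)"
  using assms apply (simp only: insert_iff prod.inject empty_iff simp_thms)
  apply (elim conjE disjE)
  apply presburger+
  done


definition inclos :: "hvert set set \<Rightarrow> hvert \<Rightarrow> hvert set \<Rightarrow> bool" where
  "inclos E w e \<longleftrightarrow> (\<exists>i j. e = {i,j} \<and> w \<in> {i,j} \<union> edge_nbhd E i j)"

lemma inc_center: "inclos E w {w,y}"
  unfolding inclos_def by blast

lemma inc_outer: "{w,y} \<in> E \<Longrightarrow> x \<noteq> w \<Longrightarrow> inclos E w {x,y}"
  unfolding inclos_def edge_nbhd_def nbr_def by blast

lemma clique6:
  assumes "finite S" "card S = 6" "S \<subseteq> E" "\<forall>e\<in>S. inclos E w e"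
  shows "\<not> colorable E (interfere E) 5"
proof
  assume "colorable E (interfere E) 5"
  then obtain col :: "hvert set \<Rightarrow> nat" where c1: "\<forall>e\<in>E. col e < 5"
    and c2: "\<forall>u\<in>E. \<forall>v\<in>E. interfere E u v \<longrightarrow> col u \<noteq> col v"
    unfolding colorable_def by blast
  have "inj_on col S"
  proof (rule inj_onI, rule ccontr)
    fix e f assume ef: "e \<in> S" "f \<in> S" "col e = col f" "e \<noteq> f"
    obtain i j where "e = {i,j}" "w \<in> {i,j} \<union> edge_nbhd E i j" using assms(4) ef unfolding inclos_def by blast
    moreover obtain k l where "f = {k,l}" "w \<in> {k,l} \<union> edge_nbhd E k l" using assms(4) ef unfolding inclos_def by blast
    ultimately have "interfere E e f" using ef unfolding interfere_def by blast
    then show False using c2 ef assms(3) by blast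
  qed
  then have "card (col ` S) = 6" using assms(2) card_image by metis
  moreover have "col ` S \<subseteq> {..<5}" using c1 assms(3) by auto
  ultimately show False using card_mono[of "{..<5::nat}" "col ` S"] by simp
qed

lemma dir1:
  assumes "CE a b \<union> CE (a+4) b \<subseteq> E"
  shows "\<not> colorable E (interfere E) 5"
proof -
  let ?w = "(a+4,b+2)"
  let ?S = "{{?w,(a+3,b+2)}, {(a+2,b+2),(a+3,b+2)}, {?w,(a+4+1,b+2)}, {(a+4+2,b+2),(a+4+1,b+2)}, {?w,(a+4,b+1)}, {(a+4,b),(a+4,b+1)}}"
  have sub: "?S \<subseteq> E" using assms by (auto simp: CE_def insert_commute)
  have m: "{?w,(a+3,b+2)} \<in> E" "{?w,(a+4+1,b+2)} \<in> E" "{?w,(a+4,b+1)} \<in> E" using sub by auto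
  show ?thesis
  proof (rule clique6[OF _ _ sub])
    show "card ?S = 6" by (simp add: doubleton_eq_iff)
    show "\<forall>e\<in>?S. inclos E ?w e" using m by (auto intro!: inc_center inc_outer)
  qed simp
qed

lemma dir2:
  assumes "CE a b \<union> CE (a+2) (b+2) \<subseteq> E"
  shows "\<not> colorable E (interfere E) 5"
proof -
  let ?w = "(a+2,b+2)"
  let ?S = "{{?w,(a+1,b+2)}, {(a,b+2),(a+1,b+2)}, {?w,(a+3,b+2)}, {(a+4,b+2),(a+3,b+2)}, {?w,(a+2,b+2+1)}, {(a+2,b+2+2),(a+2,b+2+1)}}"
  have sub: "?S \<subseteq> E" using assms by (auto simp: CE_def insert_commute)
  have m: "{?w,(a+1,b+2)} \<in> E" "{?w,(a+3,b+2)} \<in> E" "{?w,(a+2,b+2+1)} \<in> E" using sub by auto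
  show ?thesis
  proof (rule clique6[OF _ _ sub])
    show "card ?S = 6" by (simp add: doubleton_eq_iff)
    show "\<forall>e\<in>?S. inclos E ?w e" using m by (auto intro!: inc_center inc_outer)
  qed simp
qed

lemma dir3:
  assumes "CE a b \<union> CE (a-2) (b+2) \<subseteq> E"
  shows "\<not> colorable E (interfere E) 5"
proof -
  let ?w = "(a,b+2)"
  let ?S = "{{?w,(a+1,b+2)}, {(a+2,b+2),(a+1,b+2)}, {?w,(a-2+1,b+2)}, {(a-2,b+2),(a-2+1,b+2)}, {?w,(a,b+1)}, {(a,b),(a,b+1)}}"
  have sub: "?S \<subseteq> E" using assms by (auto simp: CE_def insert_commute)
  have m: "{?w,(a+1,b+2)} \<in> E" "{?w,(a-2+1,b+2)} \<in> E" "{?w,(a,b+1)} \<in> E" using sub by auto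
  show ?thesis
  proof (rule clique6[OF _ _ sub])
    show "card ?S = 6" by (simp add: doubleton_eq_iff)
    show "\<forall>e\<in>?S. inclos E ?w e" using m by (auto intro!: inc_center inc_outer)
  qed simp
qed

lemma conn_dirs:
  assumes "valid_cell c" "valid_cell d" "cells_connected c d"
  shows "d = (fst c + 2, snd c) \<or> d = (fst c - 2, snd c) \<or> d = (fst c + 1, snd c + 1) \<or>
         d = (fst c - 1, snd c + 1) \<or> d = (fst c + 1, snd c - 1) \<or> d = (fst c - 1, snd c - 1)"
proof -
  obtain x y x' y' where c: "c = (x,y)" and d: "d = (x',y')" by (cases c, cases d) auto
  have v: "even (x+y)" "even (x'+y')" using assms(1,2) by (auto simp: valid_cell_def c d)
  have ne: "(x,y) \<noteq> (x',y')" using assms(3) by (auto simp: cells_connected_def c d)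
  obtain e where e1: "e \<in> CE (2*x) (2*y)" and e2: "e \<in> CE (2*x') (2*y')"
    using assms(3) by (auto simp: cells_connected_def cell_edges_CE c d)
  have "2*x + (2*(x'-x)) = 2*x'" "2*y + (2*(y'-y)) = 2*y'" by simp_all
  then have e2': "e \<in> CE (2*x + (2*(x'-x))) (2*y + (2*(y'-y)))" using e2 by simp
  have "(x',y') = (x + 2, y) \<or> (x',y') = (x - 2, y) \<or> (x',y') = (x + 1, y + 1) \<or>
         (x',y') = (x - 1, y + 1) \<or> (x',y') = (x + 1, y - 1) \<or> (x',y') = (x - 1, y - 1)"
    by (rule phase2[OF phase1[OF e1 e2'] v ne])
  then show ?thesis using c d by simp
qed

lemma unit_sym: "unit_dist u v = unit_dist v u"
  by (simp add: unit_dist_def abs_minus_commute)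

lemma edge_repr:
  assumes "e \<in> hh_edges"
  shows "\<exists>X Y a b. hvalid X Y a b \<and> e = {(2*X,2*Y),(2*X+a,2*Y+b)}"
proof -
  obtain u v where e: "e = {u,v}" and h: "hh_vert u" "hh_vert v" "unit_dist u v"
    using assms unfolding hh_edges_def by blast
  obtain x1 y1 x2 y2 where u: "u = (x1,y1)" and v: "v = (x2,y2)" by (cases u, cases v) auto
  have "unit_dist (x2,y2) (x1,y1)" using h(3) u v unit_sym by simp
  from edge_form[OF h(1,2)[unfolded u v] this] obtain X Y a b where
    "hvalid X Y a b" "((x1,y1) = (2*X,2*Y) \<and> (x2,y2) = (2*X+a,2*Y+b)) \<or> ((x2,y2) = (2*X,2*Y) \<and> (x1,y1) = (2*X+a,2*Y+b))"
    by blast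
  then show ?thesis using e u v by (auto simp: insert_commute)
qed

lemma hh_edge_mem:
  assumes "{z,i} \<in> hh_edges"
  shows "hh_vert z \<and> unit_dist z i"
proof -
  obtain u v where e: "{z,i} = {u,v}" and h: "hh_vert u" "hh_vert v" "unit_dist u v"
    using assms unfolding hh_edges_def by blast
  then show ?thesis using unit_sym[of u v] by (auto simp: doubleton_eq_iff)
qed

definition near :: "int \<Rightarrow> int \<Rightarrow> int \<Rightarrow> int \<Rightarrow> hvert \<Rightarrow> bool" where
  "near X Y a b z \<longleftrightarrow> \<bar>fst z - 2*X\<bar> + \<bar>snd z - 2*Y\<bar> \<le> 1 \<or> (fst z = 2*X+2*a \<and> snd z = 2*Y+2*b)"

lemma closure_near:
  assumes E: "E \<subseteq> hh_edges" and hv: "hvalid X Y a b"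
    and ij: "{i,j} = {(2*X,2*Y),(2*X+a,2*Y+b)}" and z: "z \<in> {i,j} \<union> edge_nbhd E i j"
  shows "near X Y a b z"
proof -
  have key: "near X Y a b z" if t: "t = (2*X,2*Y) \<or> t = (2*X+a,2*Y+b)" and zt: "z = t \<or> {z,t} \<in> E" for t
  proof -
    obtain zx zy where zz: "z = (zx,zy)" by (cases z) auto
    have ab: "\<bar>a\<bar> + \<bar>b\<bar> = 1" using hv unfolding hvalid_def by auto
    from t show ?thesis
    proof
      assume tu: "t = (2*X,2*Y)"
      from zt show ?thesis
      proof
        assume "z = t" then show ?thesis using tu by (simp add: near_def)
      next
        assume "{z,t} \<in> E"
        then have "unit_dist z t" using E hh_edge_mem by blast
        then show ?thesis using tu by (simp add: near_def unit_dist_def)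
      qed
    next
      assume tm: "t = (2*X+a,2*Y+b)"
      from zt show ?thesis
      proof
        assume "z = t" then show ?thesis using tm ab by (simp add: near_def)
      next
        assume "{z,t} \<in> E"
        then have "hh_vert z \<and> unit_dist z t" using E hh_edge_mem by blast
        then have "\<bar>zx - 2*X\<bar> + \<bar>zy - 2*Y\<bar> \<le> 1 \<or> (zx = 2*X+2*a \<and> zy = 2*Y+2*b)"
          using mid_nbr[OF hv] tm zz by blast
        then show ?thesis using zz by (simp add: near_def)
      qed
    qed
  qed
  have ti: "i = (2*X,2*Y) \<or> i = (2*X+a,2*Y+b)" "j = (2*X,2*Y) \<or> j = (2*X+a,2*Y+b)"
    using ij by (auto simp: doubleton_eq_iff)
  from z have "z = i \<or> z = j \<or> {z,i} \<in> E \<or> {z,j} \<in> E"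
    unfolding edge_nbhd_def nbr_def by auto
  then show ?thesis using key ti by blast
qed

lemma sum_pair:
  assumes "hvalid X Y a b"
  shows "(\<Sum>p\<in>{(2*X,2*Y),(2*X+a,2*Y+b)}. fst p) = 4*X + a"
    "(\<Sum>p\<in>{(2*X,2*Y),(2*X+a,2*Y+b)}. snd p) = 4*Y + b"
proof -
  have "(2*X,2*Y) \<noteq> (2*X+a,2*Y+b)" using assms by (auto simp: hvalid_def)
  then show "(\<Sum>p\<in>{(2*X,2*Y),(2*X+a,2*Y+b)}. fst p) = 4*X + a"
    "(\<Sum>p\<in>{(2*X,2*Y),(2*X+a,2*Y+b)}. snd p) = 4*Y + b" by simp_all
qed

definition ecol :: "hvert set \<Rightarrow> nat" where
  "ecol e = cf (\<Sum>p\<in>e. fst p) (\<Sum>p\<in>e. snd p)"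

lemma upper:
  assumes "E \<subseteq> hh_edges"
  shows "colorable E (interfere E) 6"
  unfolding colorable_def
proof (intro exI[of _ ecol] conjI ballI impI)
  fix e assume "e \<in> E" show "ecol e < 6" unfolding ecol_def by (rule cf_lt)
next
  fix u w assume uE: "u \<in> E" and wE: "w \<in> E" and itf: "interfere E u w"
  obtain i j k l z where uw: "u \<noteq> w" "u = {i,j}" "w = {k,l}"
    and z1: "z \<in> {i,j} \<union> edge_nbhd E i j" and z2: "z \<in> {k,l} \<union> edge_nbhd E k l"
    using itf unfolding interfere_def by blast
  obtain X Y a b where h1: "hvalid X Y a b" and u: "u = {(2*X,2*Y),(2*X+a,2*Y+b)}"
    using edge_repr uE assms by blast
  obtain X' Y' a' b' where h2: "hvalid X' Y' a' b'" and w: "w = {(2*X',2*Y'),(2*X'+a',2*Y'+b')}"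
    using edge_repr wE assms by blast
  have n1: "near X Y a b z" using closure_near[OF assms h1 _ z1] uw u by simp
  have n2: "near X' Y' a' b' z" using closure_near[OF assms h2 _ z2] uw w by simp
  show "ecol u \<noteq> ecol w"
  proof
    assume "ecol u = ecol w"
    then have "cf (4*X+a) (4*Y+b) = cf (4*X'+a') (4*Y'+b')"
      unfolding ecol_def u w sum_pair[OF h1] sum_pair[OF h2] .
    from cf_inj[OF h1 h2 this] have eq: "a = a'" "b = b'" "even (X+Y) = even (X'+Y')" by auto
    have d: "(a = 1 \<and> b = 0) \<or> (a = -1 \<and> b = 0) \<or> (a = 0 \<and> (b = 1 \<or> b = -1))"
      using h1 unfolding hvalid_def by auto
    have "X = X' \<and> Y = Y'"
      by (rule geo[OF eq(3) d]) (use n1 n2 eq in \<open>auto simp: near_def\<close>)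
    then have "u = w" using u w eq by simp
    then show False using uw by simp
  qed
qed

theorem lemma1:
  fixes V :: "hvert set" and E :: "hvert set set"
  assumes "finite_hh_subgraph V E"
    and "contains_two_connected_cells V E"
  shows "chromatic_number E (interfere E) = 6"
proof -
  have E: "E \<subseteq> hh_edges" using assms(1) unfolding finite_hh_subgraph_def by blast
  obtain c d where v: "valid_cell c" "valid_cell d" and cc: "cells_connected c d"
    and sub: "cell_edges c \<union> cell_edges d \<subseteq> E"
    using assms(2) unfolding contains_two_connected_cells_def by blast
  obtain x y where c: "c = (x,y)" by (cases c) auto
  have sub': "CE (2*x) (2*y) \<union> CE (2*fst d) (2*snd d) \<subseteq> E" using sub c by (simp add: cell_edges_CE)
  have no5: "\<not> colorable E (interfere E) 5"
    using conn_dirs[OF v cc] unfolding c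
  proof (elim disjE)
    assume "d = (fst (x,y) + 2, snd (x,y))"
    then have "CE (2*x) (2*y) \<union> CE (2*x+4) (2*y) \<subseteq> E" using sub' by (simp add: algebra_simps)
    then show ?thesis by (rule dir1)
  next
    assume "d = (fst (x,y) - 2, snd (x,y))"
    then have "CE (2*(x-2)) (2*y) \<union> CE (2*(x-2)+4) (2*y) \<subseteq> E" using sub' by (auto simp: algebra_simps)
    then show ?thesis by (rule dir1)
  next
    assume "d = (fst (x,y) + 1, snd (x,y) + 1)"
    then have "CE (2*x) (2*y) \<union> CE (2*x+2) (2*y+2) \<subseteq> E" using sub' by (simp add: algebra_simps)
    then show ?thesis by (rule dir2)
  next
    assume "d = (fst (x,y) - 1, snd (x,y) + 1)"
    then have "CE (2*x) (2*y) \<union> CE (2*x-2) (2*y+2) \<subseteq> E" using sub' by (simp add: algebra_simps)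
    then show ?thesis by (rule dir3)
  next
    assume "d = (fst (x,y) + 1, snd (x,y) - 1)"
    then have "CE (2*(x+1)) (2*(y-1)) \<union> CE (2*(x+1)-2) (2*(y-1)+2) \<subseteq> E" using sub' by (auto simp: algebra_simps)
    then show ?thesis by (rule dir3)
  next
    assume "d = (fst (x,y) - 1, snd (x,y) - 1)"
    then have "CE (2*(x-1)) (2*(y-1)) \<union> CE (2*(x-1)+2) (2*(y-1)+2) \<subseteq> E" using sub' by (auto simp: algebra_simps)
    then show ?thesis by (rule dir2)
  qed
  show ?thesis unfolding chromatic_number_def
  proof (rule Least_equality)
    show "colorable E (interfere E) 6" by (rule upper[OF E])
  next
    fix k assume k: "colorable E (interfere E) k"
    show "6 \<le> k"
    proof (rule ccontr)
      assume "\<not> 6 \<le> k"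
      then have "k \<le> 5" by simp
      then have "colorable E (interfere E) 5" using k unfolding colorable_def
        by (meson less_le_trans)
      then show False using no5 by simp
    qed
  qed
qed

end
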